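(* Let $K$ be a metrizable compact Hausdorff space, $\varphi$ a continuous open map of $K$ onto itself, $w\in C(K)$, and let $T$ be the operator on $C(K)$ defined by $(Tf)(k)=w(k)f(\varphi(k))$, $f\in C(K)$, $k\in K$. Then the following are equivalent: (1) $0\in\sigma_{a.p.}(T)$; (2) there is $k\in K$ such that $w\equiv0$ on $\varphi^{-1}(\{k\})$.
   Context: $C(K)$ carries the sup norm. $\sigma_{a.p.}(T)$ is the set of $\lambda$ for which there are $f_n\in C(K)$, $\|f_n\|=1$, with $Tf_n-\lambda f_n\to0$. *)

theory Defs
  imports "HOL-Analysis.Analysis"
begin

text \<open>Sup norm on C(K), K a subset of a metric space (hence metrizable).
  The extra 0 only matters for K empty (then the norm is 0) and makes Sup well-behaved.\<close>
definition supnorm :: "'a set \<Rightarrow> ('a \<Rightarrow> complex) \<Rightarrow> real" where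
  "supnorm K f = Sup (insert 0 ((\<lambda>k. norm (f k)) ` K))"

definition ap_spectrum ::
  "'a::topological_space set \<Rightarrow> (('a \<Rightarrow> complex) \<Rightarrow> ('a \<Rightarrow> complex)) \<Rightarrow> complex set" where
  "ap_spectrum K T = {c. \<exists>fs :: nat \<Rightarrow> 'a \<Rightarrow> complex.
      (\<forall>n. continuous_on K (fs n) \<and> supnorm K (fs n) = 1) \<and>
      (\<lambda>n. supnorm K (\<lambda>k. T (fs n) k - c * fs n k)) \<longlonglongrightarrow> 0}"

definition open_map_on :: "'a::topological_space set \<Rightarrow> ('a \<Rightarrow> 'a) \<Rightarrow> bool" where
  "open_map_on K \<phi> \<longleftrightarrow> (\<forall>U. openin (top_of_set K) U \<longrightarrow> openin (top_of_set K) (\<phi> ` U))"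

end

theory Submission
  imports Defs
begin

lemma supnorm_le:
  assumes "\<And>k. k \<in> K \<Longrightarrow> norm (f k) \<le> c" "0 \<le> c"
  shows "supnorm K f \<le> c"
  unfolding supnorm_def using assms by (intro cSup_least) auto

lemma supnorm_ge:
  assumes "bdd_above ((\<lambda>k. norm (f k)) ` K)" "k \<in> K"
  shows "norm (f k) \<le> supnorm K f"
  unfolding supnorm_def using assms by (intro cSup_upper) auto

lemma supnorm_nonneg:
  assumes "bdd_above ((\<lambda>k. norm (f k)) ` K)"
  shows "0 \<le> supnorm K f"
  unfolding supnorm_def using assms by (intro cSup_upper) auto

lemma bdd_cont:
  assumes "compact K" "continuous_on K f"
  shows "bdd_above ((\<lambda>k. norm (f k)) ` K)"
proof -
  have "compact (f ` K)" using assms compact_continuous_image by blast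
  then obtain B where "\<forall>x\<in>f ` K. norm x \<le> B" using compact_imp_bounded bounded_iff by metis
  then show ?thesis by (auto simp: bdd_above_def)
qed

lemma dir1:
  fixes K :: "'a::metric_space set" and \<phi> :: "'a \<Rightarrow> 'a" and w :: "'a \<Rightarrow> complex"
  assumes "compact K"
    and "continuous_on K \<phi>" and "\<phi> ` K = K" and om: "open_map_on K \<phi>"
    and "continuous_on K w"
    and nz: "\<forall>k\<in>K. \<exists>x\<in>K. \<phi> x = k \<and> w x \<noteq> 0"
  shows "\<exists>N::nat. \<forall>y\<in>K. \<exists>x\<in>K. \<phi> x = y \<and> norm (w x) > 1 / real (Suc N)"
proof -
  define V where "V n = {x\<in>K. norm (w x) > 1 / real (Suc n)}" for n :: nat
  have "openin (top_of_set K) (V n)" for n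
  proof -
    have "continuous_on K (\<lambda>x. norm (w x))" using assms(5) by (intro continuous_intros)
    from continuous_openin_preimage_gen[OF this, of "{1 / real (Suc n)<..}"]
    have "openin (top_of_set K) (K \<inter> (\<lambda>x. norm (w x)) -` {1 / real (Suc n)<..})" by simp
    moreover have "K \<inter> (\<lambda>x. norm (w x)) -` {1 / real (Suc n)<..} = V n" unfolding V_def by auto
    ultimately show ?thesis by simp
  qed
  then have oV: "openin (top_of_set K) (\<phi> ` V n)" for n
    using om unfolding open_map_on_def by blast
  have "\<forall>n. \<exists>U. open U \<and> \<phi> ` V n = K \<inter> U"
  proof
    fix n show "\<exists>U. open U \<and> \<phi> ` V n = K \<inter> U" using oV[of n] unfolding openin_open by blast
  qed
  from choice[OF this] obtain O' where O'a: "\<forall>n. open (O' n) \<and> \<phi> ` V n = K \<inter> O' n" by blast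
  then have O': "\<And>n. open (O' n) \<and> \<phi> ` V n = K \<inter> O' n" by blast
  have "K \<subseteq> \<Union>(range O')"
  proof
    fix y assume "y \<in> K"
    then obtain x where x: "x \<in> K" "\<phi> x = y" "w x \<noteq> 0" using nz by blast
    then obtain n where "1 / real (Suc n) < norm (w x)"
      using nat_approx_posE[of "norm (w x)"] x(3) by auto
    then have "y \<in> \<phi> ` V n" using x unfolding V_def by auto
    then show "y \<in> \<Union>(range O')" using O' by auto
  qed
  then obtain F where F: "F \<subseteq> range O'" "finite F" "K \<subseteq> \<Union>F"
    using compactE[OF assms(1) \<open>K \<subseteq> \<Union>(range O')\<close>] O' by auto
  then obtain G where G: "finite G" "F = O' ` G"
    using finite_subset_image[OF F(2) F(1)] by auto
  define N where "N = Max (insert 0 G)"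
  have mono: "V m \<subseteq> V n" if "m \<le> n" for m n
  proof -
    have "1 / real (Suc n) \<le> 1 / real (Suc m)" using that by (simp add: frac_le)
    then show ?thesis unfolding V_def by auto
  qed
  show ?thesis
  proof (intro exI ballI)
    fix y assume "y \<in> K"
    then obtain m where m: "m \<in> G" "y \<in> O' m" using F G by auto
    then have "m \<le> N" unfolding N_def using G by auto
    have "y \<in> \<phi> ` V m" using O' m \<open>y \<in> K\<close> by auto
    then have "y \<in> \<phi> ` V N" using mono[OF \<open>m \<le> N\<close>] by auto
    then show "\<exists>x\<in>K. \<phi> x = y \<and> norm (w x) > 1 / real (Suc N)" unfolding V_def by auto
  qed
qed

lemma cont_T:
  fixes K :: "'a::metric_space set" and w f :: "'a \<Rightarrow> complex"
  assumes "continuous_on K \<phi>" "\<phi> ` K = K" "continuous_on K w" "continuous_on K f"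
  shows "continuous_on K (\<lambda>k. w k * f (\<phi> k) - c * f k)"
proof -
  have "continuous_on K (\<lambda>k. f (\<phi> k))"
    using continuous_on_compose2[OF assms(4) assms(1)] assms(2) by auto
  then show ?thesis using assms
    by (intro continuous_on_diff continuous_on_mult continuous_on_const) auto
qed

lemma dir1b:
  fixes K :: "'a::metric_space set" and \<phi> :: "'a \<Rightarrow> 'a" and w :: "'a \<Rightarrow> complex"
  assumes "compact K"
    and "continuous_on K \<phi>" and "\<phi> ` K = K" and "open_map_on K \<phi>"
    and "continuous_on K w"
    and ap: "0 \<in> ap_spectrum K (\<lambda>f k. w k * f (\<phi> k))"
  shows "\<exists>k\<in>K. \<forall>x\<in>K. \<phi> x = k \<longrightarrow> w x = 0"
proof (rule ccontr)
  assume "\<not> ?thesis"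
  then have nz: "\<forall>k\<in>K. \<exists>x\<in>K. \<phi> x = k \<and> w x \<noteq> 0" by auto
  obtain N :: nat where N: "\<forall>y\<in>K. \<exists>x\<in>K. \<phi> x = y \<and> norm (w x) > 1 / real (Suc N)"
    using dir1[OF assms(1-5) nz] by blast
  obtain fs where fs: "\<And>n. continuous_on K (fs n)" "\<And>n. supnorm K (fs n) = 1"
    and lim: "(\<lambda>n. supnorm K (\<lambda>k. w k * fs n (\<phi> k) - 0 * fs n k)) \<longlonglongrightarrow> 0"
    using ap unfolding ap_spectrum_def by blast
  define s where "s n = supnorm K (\<lambda>k. w k * fs n (\<phi> k) - 0 * fs n k)" for n
  have bd: "1 \<le> real (Suc N) * s n" for n
  proof -
    have bdd: "bdd_above ((\<lambda>k. norm (w k * fs n (\<phi> k) - 0 * fs n k)) ` K)"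
      using bdd_cont[OF assms(1) cont_T[OF assms(2,3,5) fs(1), where c=0]] .
    have "supnorm K (fs n) \<le> real (Suc N) * s n"
    proof (rule supnorm_le)
      show "0 \<le> real (Suc N) * s n" using supnorm_nonneg[OF bdd] unfolding s_def by simp
      fix y assume "y \<in> K"
      then obtain x where x: "x \<in> K" "\<phi> x = y" "norm (w x) > 1 / real (Suc N)" using N by blast
      have "norm (w x * fs n (\<phi> x) - 0 * fs n x) \<le> s n"
        using supnorm_ge[OF bdd x(1)] unfolding s_def .
      then have "norm (w x) * norm (fs n y) \<le> s n" using x by (simp add: norm_mult)
      moreover have "1 / real (Suc N) * norm (fs n y) \<le> norm (w x) * norm (fs n y)"
        by (rule mult_right_mono) (use x(3) in auto)
      moreover have "norm (fs n y) / real (Suc N) = 1 / real (Suc N) * norm (fs n y)" by simp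
      ultimately have "norm (fs n y) / real (Suc N) \<le> s n" by linarith
      then show "norm (fs n y) \<le> real (Suc N) * s n"
        by (simp add: divide_le_eq mult.commute)
    qed
    then show ?thesis using fs(2) by simp
  qed
  have "s \<longlonglongrightarrow> 0" using lim unfolding s_def .
  then have "\<forall>\<^sub>F n in sequentially. s n < 1 / real (Suc N)"
    by (intro order_tendstoD) auto
  then obtain n where "s n < 1 / real (Suc N)" by (meson eventually_sequentially order_refl)
  then have "real (Suc N) * s n < 1" by (simp add: field_simps)
  with bd[of n] show False by simp
qed

lemma dir2:
  fixes K :: "'a::metric_space set" and \<phi> :: "'a \<Rightarrow> 'a" and w :: "'a \<Rightarrow> complex"
  assumes "compact K"
    and "continuous_on K \<phi>" and "\<phi> ` K = K"
    and "continuous_on K w"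
    and k: "k \<in> K" and z: "\<forall>x\<in>K. \<phi> x = k \<longrightarrow> w x = 0"
  shows "0 \<in> ap_spectrum K (\<lambda>f k. w k * f (\<phi> k))"
proof -
  define fs where "fs n y = complex_of_real (max 0 (1 - real (Suc n) * dist y k))" for n y
  have fsle: "norm (fs n y) \<le> 1" for n y
    unfolding fs_def by auto
  have fs0: "fs n y = 0" if "1 / real (Suc n) \<le> dist y k" for n y
  proof -
    have "1 \<le> real (Suc n) * dist y k" using that by (simp add: field_simps)
    then show ?thesis unfolding fs_def by simp
  qed
  have cont: "continuous_on K (fs n)" for n
    unfolding fs_def by (intro continuous_intros)
  have norm1: "supnorm K (fs n) = 1" for n
  proof -
    have "supnorm K (fs n) \<le> 1" by (rule supnorm_le) (use fsle in auto)
    moreover have "norm (fs n k) \<le> supnorm K (fs n)"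
      by (rule supnorm_ge[OF bdd_aboveI2[where M=1, OF fsle] k])
    moreover have "fs n k = 1" unfolding fs_def by simp
    ultimately show ?thesis by simp
  qed
  define s where "s n = supnorm K (\<lambda>x. w x * fs n (\<phi> x) - 0 * fs n x)" for n
  have "s \<longlonglongrightarrow> 0"
  proof (rule LIMSEQ_I)
    fix r :: real assume "0 < r"
    define C where "C = {x\<in>K. r / 2 \<le> norm (w x)}"
    have "closed C"
    proof -
      have "continuous_on K (\<lambda>x. norm (w x))" using assms(4) by (intro continuous_intros)
      from continuous_closedin_preimage[OF this closed_atLeast[of "r/2"]]
      have "closedin (top_of_set K) (K \<inter> (\<lambda>x. norm (w x)) -` {r/2..})" by simp
      moreover have "K \<inter> (\<lambda>x. norm (w x)) -` {r/2..} = C" unfolding C_def by auto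
      ultimately have "closedin (top_of_set K) C" by simp
      then show ?thesis using compact_imp_closed[OF assms(1)] closedin_closed_trans by blast
    qed
    moreover have "C \<subseteq> K" unfolding C_def by auto
    ultimately have "compact C" using assms(1) compact_Int_closed[of K C] by (simp add: Int_absorb1)
    moreover have "continuous_on C \<phi>" using continuous_on_subset[OF assms(2) \<open>C \<subseteq> K\<close>] .
    ultimately have "compact (\<phi> ` C)" by (rule compact_continuous_image[rotated])
    then have cl: "closed (\<phi> ` C)" by (rule compact_imp_closed)
    have "k \<notin> \<phi> ` C"
    proof
      assume "k \<in> \<phi> ` C"
      then obtain x where "x \<in> C" "\<phi> x = k" by auto
      then show False using z \<open>0 < r\<close> unfolding C_def by auto
    qed
    then obtain e where e: "e > 0" "ball k e \<inter> \<phi> ` C = {}"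
    proof -
      have "open (- \<phi> ` C)" using cl by (simp add: open_Compl)
      then obtain e where "e > 0" "ball k e \<subseteq> - \<phi> ` C"
        using \<open>k \<notin> \<phi> ` C\<close> open_contains_ball by blast
      then show ?thesis using that by blast
    qed
    obtain M :: nat where M: "1 / real (Suc M) < e" using nat_approx_posE[OF e(1)] by blast
    show "\<exists>no. \<forall>n\<ge>no. norm (s n - 0) < r"
    proof (intro exI allI impI)
      fix n assume "M \<le> n"
      have "1 / real (Suc n) \<le> 1 / real (Suc M)" using \<open>M \<le> n\<close> by (simp add: frac_le)
      with M have ne: "1 / real (Suc n) < e" by linarith
      have pt: "norm (w x * fs n (\<phi> x) - 0 * fs n x) \<le> r / 2" if "x \<in> K" for x
      proof (cases "x \<in> C")
        case True
        then have "\<phi> x \<notin> ball k e" using e(2) by auto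
        then have "e \<le> dist (\<phi> x) k" by (simp add: dist_commute)
        then have "fs n (\<phi> x) = 0" using ne by (intro fs0) linarith
        then show ?thesis using \<open>0 < r\<close> by simp
      next
        case False
        then have "norm (w x) \<le> r / 2" using that unfolding C_def by auto
        then have "norm (w x) * norm (fs n (\<phi> x)) \<le> r / 2 * 1"
          using fsle \<open>0 < r\<close> by (intro mult_mono) auto
        then show ?thesis by (simp add: norm_mult)
      qed
      have "s n \<le> r / 2" unfolding s_def by (rule supnorm_le) (use pt \<open>0 < r\<close> in auto)
      moreover have "bdd_above ((\<lambda>x. norm (w x * fs n (\<phi> x) - 0 * fs n x)) ` K)"
        unfolding bdd_above_def using pt by blast
      then have "0 \<le> s n" unfolding s_def by (rule supnorm_nonneg)
      ultimately show "norm (s n - 0) < r" using \<open>0 < r\<close> by simp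
    qed
  qed
  then have "(\<lambda>n. supnorm K (\<lambda>x. w x * fs n (\<phi> x) - 0 * fs n x)) \<longlonglongrightarrow> 0"
    unfolding s_def .
  then show ?thesis unfolding ap_spectrum_def
    by (intro CollectI exI[of _ fs] conjI allI cont norm1)
qed

theorem lemma2:
  fixes K :: "'a::metric_space set" and \<phi> :: "'a \<Rightarrow> 'a" and w :: "'a \<Rightarrow> complex"
  assumes "compact K"
    and "continuous_on K \<phi>" and "\<phi> ` K = K" and "open_map_on K \<phi>"
    and "continuous_on K w"
  shows "0 \<in> ap_spectrum K (\<lambda>f k. w k * f (\<phi> k))
         \<longleftrightarrow> (\<exists>k\<in>K. \<forall>x\<in>K. \<phi> x = k \<longrightarrow> w x = 0)"
  using dir1b[OF assms] dir2[OF assms(1,2,3,5)] by blast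

end
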